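(* There exists a one-sided non-adaptive tester for $k$-monotonicity of functions $f\colon[n]\to\{0,1\}$ with query complexity $q(n,\varepsilon,k)=O(k/\varepsilon)$.
   Context: $[n]=\{1,\dots,n\}$ with its usual order. A function $f\colon[n]\to\{0,1\}$ is $k$-monotone if there do not exist $x_1\leq\cdots\leq x_{k+1}$ with $f(x_1)=1$ and $f(x_i)\neq f(x_{i+1})$ for all $i\in[k]$. Distance is normalized Hamming distance. A tester, given $\varepsilon$ and query access to $f$, accepts $k$-monotone $f$ with probability at least $2/3$ and rejects $f$ that is $\varepsilon$-far (distance at least $\varepsilon$) from every $k$-monotone function with probability at least $2/3$; one-sided means $k$-monotone functions are accepted with probability $1$; non-adaptive means queries do not depend on previous answers. *)

theory Defs
  imports "HOL-Probability.Probability"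
begin

text \<open>Functions f : [n] -> {0,1} are modelled as f :: nat => bool (True = 1);
  only the values on {1..n} are relevant.\<close>

definition k_monotone :: "nat \<Rightarrow> nat \<Rightarrow> (nat \<Rightarrow> bool) \<Rightarrow> bool" where
  "k_monotone n k f \<longleftrightarrow>
     \<not> (\<exists>x :: nat \<Rightarrow> nat.
          (\<forall>i\<in>{1..k+1}. x i \<in> {1..n}) \<and>
          (\<forall>i\<in>{1..k}. x i \<le> x (Suc i)) \<and>
          f (x 1) \<and>
          (\<forall>i\<in>{1..k}. f (x i) \<noteq> f (x (Suc i))))"

definition ham_dist :: "nat \<Rightarrow> (nat \<Rightarrow> bool) \<Rightarrow> (nat \<Rightarrow> bool) \<Rightarrow> real" where
  "ham_dist n f g = real (card {x\<in>{1..n}. f x \<noteq> g x}) / real n"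

definition far_from_k_monotone :: "nat \<Rightarrow> nat \<Rightarrow> real \<Rightarrow> (nat \<Rightarrow> bool) \<Rightarrow> bool" where
  "far_from_k_monotone n k \<epsilon> f \<longleftrightarrow> (\<forall>g. k_monotone n k g \<longrightarrow> ham_dist n f g \<ge> \<epsilon>)"

text \<open>A non-adaptive randomized tester: a probability distribution over pairs (Q, D),
  where Q is the list of query points (chosen before any answer is seen) and
  D decides accept (True) / reject from the list of answers map f Q.\<close>
type_synonym tester = "(nat list \<times> (bool list \<Rightarrow> bool)) pmf"

definition accept_prob :: "tester \<Rightarrow> (nat \<Rightarrow> bool) \<Rightarrow> real" where
  "accept_prob T f = measure_pmf.prob T {(Q, D). D (map f Q)}"

definition one_sided_nonadaptive_tester ::
  "nat \<Rightarrow> nat \<Rightarrow> real \<Rightarrow> real \<Rightarrow> tester \<Rightarrow> bool" where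
  "one_sided_nonadaptive_tester n k \<epsilon> q T \<longleftrightarrow>
     (\<forall>(Q, D)\<in>set_pmf T. set Q \<subseteq> {1..n} \<and> real (length Q) \<le> q) \<and>
     (\<forall>f. k_monotone n k f \<longrightarrow> accept_prob T f = 1) \<and>
     (\<forall>f. far_from_k_monotone n k \<epsilon> f \<longrightarrow> 1 - accept_prob T f \<ge> 2/3)"

end

theory Submission
  imports Defs
begin


definition blk :: "nat \<Rightarrow> nat \<Rightarrow> nat \<Rightarrow> nat set" where
  "blk n L i = {x\<in>{1..n}. (x - 1) div L = i}"

definition nblk :: "nat \<Rightarrow> nat \<Rightarrow> nat" where
  "nblk n L = (n - 1) div L + 1"

lemma blk_sub: "blk n L i \<subseteq> {1..n}"
  by (auto simp: blk_def)

lemma finite_blk[simp]: "finite (blk n L i)"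
  by (rule finite_subset[OF blk_sub]) auto

lemma blk_ne: assumes "L \<ge> 1" "n \<ge> 1" "i < nblk n L" shows "i*L+1 \<in> blk n L i"
proof -
  have "i \<le> (n-1) div L" using assms(3) by (simp add: nblk_def)
  hence "i * L \<le> ((n-1) div L) * L" by simp
  also have "\<dots> \<le> n - 1" by simp
  finally have "i*L+1 \<le> n" using assms by linarith
  thus ?thesis using assms(1) by (simp add: blk_def)
qed

lemma card_blk: assumes "L \<ge> 1" shows "card (blk n L i) \<le> L"
proof -
  have "blk n L i \<subseteq> {i*L+1..i*L+L}"
  proof
    fix x assume "x \<in> blk n L i"
    hence x: "x \<ge> 1" "(x - 1) div L = i" by (auto simp: blk_def)
    have e: "(x-1) div L * L + (x-1) mod L = x-1" by (rule div_mult_mod_eq)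
    have m: "(x-1) mod L < L" using assms by simp
    show "x \<in> {i*L+1..i*L+L}" using e m x by (simp only: atLeastAtMost_iff) linarith
  qed
  from card_mono[OF _ this] show ?thesis by simp
qed

lemma blk_order: "x \<in> blk n L i \<Longrightarrow> y \<in> blk n L j \<Longrightarrow> i < j \<Longrightarrow> x < y"
  unfolding blk_def
  by (metis (mono_tags, lifting) div_le_mono leD le_diff_iff mem_Collect_eq atLeastAtMost_iff not_le_imp_less)

lemma blk_mem: "x \<in> {1..n} \<Longrightarrow> x \<in> blk n L ((x-1) div L) \<and> (x-1) div L < nblk n L"
  unfolding blk_def nblk_def
  by (auto simp: div_le_mono less_Suc_eq_le)

lemma k_monotone_comp:
  assumes g: "k_monotone n k g"
    and phi: "\<And>x. x \<in> {1..n} \<Longrightarrow> \<phi> x \<in> {1..n}"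
    and mono: "\<And>x y. x \<in> {1..n} \<Longrightarrow> y \<in> {1..n} \<Longrightarrow> x \<le> y \<Longrightarrow> \<phi> x \<le> \<phi> y"
  shows "k_monotone n k (g \<circ> \<phi>)"
  unfolding k_monotone_def
proof
  assume "\<exists>x. (\<forall>i\<in>{1..k+1}. x i \<in> {1..n}) \<and> (\<forall>i\<in>{1..k}. x i \<le> x (Suc i)) \<and> (g \<circ> \<phi>) (x 1) \<and>
          (\<forall>i\<in>{1..k}. (g \<circ> \<phi>) (x i) \<noteq> (g \<circ> \<phi>) (x (Suc i)))"
  then obtain x where x: "\<forall>i\<in>{1..k+1}. x i \<in> {1..n}" "\<forall>i\<in>{1..k}. x i \<le> x (Suc i)"
    "(g \<circ> \<phi>) (x 1)" "\<forall>i\<in>{1..k}. (g \<circ> \<phi>) (x i) \<noteq> (g \<circ> \<phi>) (x (Suc i))" by blast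
  have "(\<forall>i\<in>{1..k+1}. (\<phi> \<circ> x) i \<in> {1..n}) \<and> (\<forall>i\<in>{1..k}. (\<phi> \<circ> x) i \<le> (\<phi> \<circ> x) (Suc i)) \<and>
     g ((\<phi> \<circ> x) 1) \<and> (\<forall>i\<in>{1..k}. g ((\<phi> \<circ> x) i) \<noteq> g ((\<phi> \<circ> x) (Suc i)))"
  proof (intro conjI ballI)
    fix i assume "i \<in> {1..k+1}" thus "(\<phi> \<circ> x) i \<in> {1..n}" using x(1) phi by auto
  next
    fix i assume i: "i \<in> {1..k}"
    hence "x i \<in> {1..n}" "x (Suc i) \<in> {1..n}" using x(1) by auto
    thus "(\<phi> \<circ> x) i \<le> (\<phi> \<circ> x) (Suc i)" using mono x(2) i by auto
  next
    show "g ((\<phi> \<circ> x) 1)" using x(3) by simp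
  next
    fix i assume "i \<in> {1..k}" thus "g ((\<phi> \<circ> x) i) \<noteq> g ((\<phi> \<circ> x) (Suc i))" using x(4) by auto
  qed
  thus False using g unfolding k_monotone_def by blast
qed



lemma q_pow_le:
  assumes L: "L \<ge> (1::nat)" and m: "m \<le> L"
  shows "(1 + 1/(4*real L)) ^ m \<le> 1 + real m / (2 * real L)"
proof -
  define u where "u = real m / (4 * real L)"
  have u0: "0 \<le> u" and u1: "u \<le> 1/4" using L m by (auto simp: u_def field_simps)
  have "(1 + 1/(4*real L)) ^ m \<le> exp (1/(4*real L)) ^ m"
    using exp_ge_add_one_self[of "1/(4*real L)"] by (intro power_mono) (auto simp: add.commute)
  also have "\<dots> = exp u" by (simp add: u_def exp_of_nat_mult[symmetric])
  also have "\<dots> \<le> 1 + u + u^2" using exp_bound[OF u0] u1 by simp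
  also have "\<dots> \<le> 1 + 2*u" using u0 u1 mult_right_mono[of u 1 u] by (simp add: power2_eq_square)
  also have "\<dots> = 1 + real m / (2 * real L)" by (simp add: u_def)
  finally show ?thesis .
qed

lemma sum_bool_split:
  fixes f :: "'a \<Rightarrow> bool"
  assumes "finite B"
  shows "(\<Sum>y\<in>B. G (f y)) = real (card {x\<in>B. f x}) * G True + real (card {x\<in>B. \<not> f x}) * (G False :: real)"
proof -
  have "(\<Sum>y\<in>B. G (f y)) = (\<Sum>y\<in>B. if f y then G True else G False)"
    by (intro sum.cong) auto
  also have "\<dots> = (\<Sum>y\<in>{x\<in>B. f x}. G True) + (\<Sum>y\<in>{x\<in>B. \<not> f x}. G False)"
    using assms by (subst sum.If_cases) (simp_all add: Int_def)
  finally show ?thesis by simp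
qed

lemma block_weight:
  fixes f :: "'a \<Rightarrow> bool"
  assumes fin: "finite B" and cB: "card B \<le> L" and L: "L \<ge> 1"
  shows "(\<Sum>p\<in>B\<times>B. (1 + 1/(4*real L)) ^ card {x\<in>B. f x \<noteq> f (fst p)} *
            (if f (fst p) \<noteq> f (snd p) then 1/2 else 1)) \<le> real (card B) ^ 2"
proof -
  define c where "c = card {x\<in>B. f x}"
  define d where "d = card {x\<in>B. \<not> f x}"
  define q where "q = 1 + 1/(4*real L)"
  have cd: "card B = c + d" unfolding c_def d_def
    using fin by (subst card_Un_disjoint[symmetric]) (auto intro: arg_cong[where f=card])
  have z: "card {x\<in>B. f x \<noteq> f y} = (if f y then d else c)" for y
    unfolding c_def d_def by (cases "f y") (auto intro: arg_cong[where f=card])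
  have "(\<Sum>p\<in>B\<times>B. q ^ card {x\<in>B. f x \<noteq> f (fst p)} * (if f (fst p) \<noteq> f (snd p) then 1/2 else 1))
     = (\<Sum>y\<in>B. \<Sum>y'\<in>B. q ^ card {x\<in>B. f x \<noteq> f y} * (if f y \<noteq> f y' then 1/2 else 1))"
    by (simp add: sum.cartesian_product case_prod_beta)
  also have "\<dots> = (\<Sum>y\<in>B. (\<lambda>b. q ^ (if b then d else c) * (if b then c + d/2 else d + c/2)) (f y))"
  proof (intro sum.cong refl)
    fix y assume "y \<in> B"
    have "(\<Sum>y'\<in>B. q ^ card {x\<in>B. f x \<noteq> f y} * (if f y \<noteq> f y' then 1/2 else 1))
        = q ^ (if f y then d else c) * (\<Sum>y'\<in>B. (\<lambda>b. if f y \<noteq> b then 1/2 else 1) (f y'))"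
      unfolding z by (simp add: sum_distrib_left)
    also have "\<dots> = q ^ (if f y then d else c) * (if f y then c + d/2 else d + c/2)"
      by (subst sum_bool_split[OF fin]) (auto simp: c_def d_def)
    finally show "(\<Sum>y'\<in>B. q ^ card {x\<in>B. f x \<noteq> f y} * (if f y \<noteq> f y' then 1/2 else 1)) =
      (\<lambda>b. q ^ (if b then d else c) * (if b then c + d/2 else d + c/2)) (f y)" by simp
  qed
  also have "\<dots> = c * (q^d * (c + d/2)) + d * (q^c * (d + c/2))"
    by (subst sum_bool_split[OF fin]) (simp add: c_def d_def)
  also have "\<dots> \<le> c * ((1 + d/(2*L)) * (c + d/2)) + d * ((1 + c/(2*L)) * (d + c/2))"
  proof -
    have "q^d \<le> 1 + d/(2*L)" unfolding q_def using q_pow_le[OF L, of d] cd cB by simp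
    moreover have "q^c \<le> 1 + c/(2*L)" unfolding q_def using q_pow_le[OF L, of c] cd cB by simp
    ultimately show ?thesis
      by (intro add_mono mult_left_mono mult_right_mono) auto
  qed
  also have "\<dots> = c^2 + c*d + d^2 + (3/4) * (c * d) * ((c + d) / L)"
    using L by (simp add: field_simps power2_eq_square)
  also have "\<dots> \<le> c^2 + c*d + d^2 + (3/4) * (c * d) * 1"
  proof -
    have "(c + d) / L \<le> 1" using cd cB L by (simp add: field_simps)
    thus ?thesis by (intro add_left_mono mult_left_mono) auto
  qed
  also have "\<dots> \<le> real (card B) ^ 2" by (simp add: cd power2_eq_square algebra_simps)
  finally show ?thesis by (simp add: q_def)
qed


definition SS :: "nat \<Rightarrow> nat \<Rightarrow> (nat \<Rightarrow> nat \<times> nat) set" where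
  "SS n L = PiE {..<nblk n L} (\<lambda>i. blk n L i \<times> blk n L i)"

definition Qs :: "nat \<Rightarrow> nat \<Rightarrow> (nat \<Rightarrow> nat \<times> nat) \<Rightarrow> nat list" where
  "Qs n L S = concat (map (\<lambda>i. [fst (S i), snd (S i)]) [0..<nblk n L])"

definition acc :: "nat \<Rightarrow> nat \<Rightarrow> nat list \<Rightarrow> bool list \<Rightarrow> bool" where
  "acc n k Q ans \<longleftrightarrow> (\<exists>g. k_monotone n k g \<and> map g Q = ans)"

definition tester :: "nat \<Rightarrow> nat \<Rightarrow> nat \<Rightarrow> tester" where
  "tester n k L = map_pmf (\<lambda>S. (Qs n L S, acc n k (Qs n L S))) (pmf_of_set (SS n L))"

lemma set_Qs: "set (Qs n L S) = (\<Union>i<nblk n L. {fst (S i), snd (S i)})"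
  by (auto simp: Qs_def)

lemma length_Qs: "length (Qs n L S) = 2 * nblk n L"
  by (simp add: Qs_def length_concat o_def sum_list_triv)

lemma SS_finite: "finite (SS n L)"
  by (auto simp: SS_def intro!: finite_PiE)

lemma SS_ne: assumes "L \<ge> 1" "n \<ge> 1" shows "SS n L \<noteq> {}"
  using blk_ne[OF assms] by (auto simp: SS_def PiE_eq_empty_iff)

lemma SS_mem: "S \<in> SS n L \<Longrightarrow> i < nblk n L \<Longrightarrow> fst (S i) \<in> blk n L i \<and> snd (S i) \<in> blk n L i"
  by (auto simp: SS_def dest!: PiE_mem)

lemma Qs_sub: "S \<in> SS n L \<Longrightarrow> set (Qs n L S) \<subseteq> {1..n}"
  using SS_mem blk_sub unfolding set_Qs by fastforce

lemma accept_mixed: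
  assumes S: "S \<in> SS n L" and g: "k_monotone n k g"
    and agree: "\<forall>x\<in>set (Qs n L S). g x = f x"
  shows "card {i\<in>{..<nblk n L}. f (fst (S i)) \<noteq> f (snd (S i))} \<le> k"
proof (rule ccontr)
  define M where "M = {i\<in>{..<nblk n L}. f (fst (S i)) \<noteq> f (snd (S i))}"
  assume "\<not> card {i\<in>{..<nblk n L}. f (fst (S i)) \<noteq> f (snd (S i))} \<le> k"
  hence cM: "card M \<ge> k + 1" by (simp add: M_def)
  define xs where "xs = sorted_list_of_set M"
  have finM: "finite M" by (simp add: M_def)
  have lxs: "length xs = card M" by (simp add: xs_def)
  have sxs: "sorted_wrt (<) xs" by (simp add: xs_def)
  have setxs: "set xs = M" using finM by (simp add: xs_def)
  define idx where "idx j = xs ! (j - 1)" for j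
  define pt where "pt j = (if g (fst (S (idx j))) = odd j then fst (S (idx j)) else snd (S (idx j)))" for j
  have idxM: "idx j \<in> M" if "j \<in> {1..k+1}" for j
    using that lxs cM setxs unfolding idx_def by (metis atLeastAtMost_iff le_less_trans less_diff_conv2 nth_mem le_simps(3) nat_less_le add.commute order.trans less_Suc_eq_le plus_1_eq_Suc)
  have pt_blk: "pt j \<in> blk n L (idx j)" if "j \<in> {1..k+1}" for j
    using idxM[OF that] SS_mem[OF S] unfolding pt_def M_def by auto
  have pt_val: "g (pt j) = odd j" if "j \<in> {1..k+1}" for j
  proof -
    have i: "idx j < nblk n L" "f (fst (S (idx j))) \<noteq> f (snd (S (idx j)))" using idxM[OF that] by (auto simp: M_def)
    have "fst (S (idx j)) \<in> set (Qs n L S)" "snd (S (idx j)) \<in> set (Qs n L S)"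
      using i(1) unfolding set_Qs by auto
    hence "g (fst (S (idx j))) \<noteq> g (snd (S (idx j)))" using agree i(2) by auto
    thus ?thesis unfolding pt_def by auto
  qed
  have "(\<forall>i\<in>{1..k+1}. pt i \<in> {1..n}) \<and> (\<forall>i\<in>{1..k}. pt i \<le> pt (Suc i)) \<and> g (pt 1) \<and>
          (\<forall>i\<in>{1..k}. g (pt i) \<noteq> g (pt (Suc i)))"
  proof (intro conjI ballI)
    fix i assume "i \<in> {1..k+1}" thus "pt i \<in> {1..n}" using pt_blk blk_sub by blast
  next
    fix i assume i: "i \<in> {1..k}"
    have "idx i < idx (Suc i)" unfolding idx_def
      using sorted_wrt_nth_less[OF sxs, of "i-1" "Suc i - 1"] i lxs cM by auto
    thus "pt i \<le> pt (Suc i)" using blk_order[OF pt_blk pt_blk] i by (simp add: less_imp_le)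
  next
    show "g (pt 1)" using pt_val[of 1] by simp
  next
    fix i assume "i \<in> {1..k}" thus "g (pt i) \<noteq> g (pt (Suc i))" using pt_val[of i] pt_val[of "Suc i"] by auto
  qed
  thus False using g unfolding k_monotone_def by blast
qed


lemma accept_far:
  assumes L: "L \<ge> 1" and n: "n \<ge> 1" and S: "S \<in> SS n L" and g: "k_monotone n k g"
    and agree: "\<forall>x\<in>set (Qs n L S). g x = f x"
    and far: "far_from_k_monotone n k \<epsilon> f"
  shows "\<epsilon> * n \<le> real (\<Sum>i<nblk n L. card {x\<in>blk n L i. f x \<noteq> f (fst (S i))})"
proof -
  define \<phi> where "\<phi> x = fst (S ((x - 1) div L))" for x
  have phi_blk: "\<phi> x \<in> blk n L ((x - 1) div L)" and phiQ: "\<phi> x \<in> set (Qs n L S)" if "x \<in> {1..n}" for x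
    using blk_mem[OF that, of L] SS_mem[OF S] unfolding \<phi>_def set_Qs by auto
  have hk: "k_monotone n k (g \<circ> \<phi>)"
  proof (rule k_monotone_comp[OF g])
    fix x assume "x \<in> {1..n}" thus "\<phi> x \<in> {1..n}" using phi_blk blk_sub by blast
  next
    fix x y assume xy: "x \<in> {1..n}" "y \<in> {1..n}" "x \<le> y"
    have le: "(x-1) div L \<le> (y-1) div L" using xy by (simp add: div_le_mono)
    show "\<phi> x \<le> \<phi> y"
    proof (cases "(x-1) div L = (y-1) div L")
      case True thus ?thesis by (simp add: \<phi>_def)
    next
      case False
      hence "(x-1) div L < (y-1) div L" using le by simp
      thus ?thesis using blk_order[OF phi_blk[OF xy(1)] phi_blk[OF xy(2)]] by simp
    qed
  qed
  have "\<epsilon> \<le> ham_dist n f (g \<circ> \<phi>)" using far hk unfolding far_from_k_monotone_def by blast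
  moreover have "{x\<in>{1..n}. f x \<noteq> (g \<circ> \<phi>) x} = {x\<in>{1..n}. f x \<noteq> f (\<phi> x)}"
    using phiQ agree by auto
  ultimately have "\<epsilon> \<le> real (card {x\<in>{1..n}. f x \<noteq> f (\<phi> x)}) / n"
    by (simp add: ham_dist_def)
  hence e: "\<epsilon> * n \<le> real (card {x\<in>{1..n}. f x \<noteq> f (\<phi> x)})"
    using n by (simp add: field_simps)
  have "{x\<in>{1..n}. f x \<noteq> f (\<phi> x)} = (\<Union>i<nblk n L. {x\<in>blk n L i. f x \<noteq> f (fst (S i))})"
  proof (intro equalityI subsetI)
    fix x assume "x \<in> {x\<in>{1..n}. f x \<noteq> f (\<phi> x)}"
    hence x: "x \<in> {1..n}" "f x \<noteq> f (\<phi> x)" by auto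
    show "x \<in> (\<Union>i<nblk n L. {x\<in>blk n L i. f x \<noteq> f (fst (S i))})"
      using blk_mem[OF x(1), of L] x(2) unfolding \<phi>_def by auto
  next
    fix x assume "x \<in> (\<Union>i<nblk n L. {x\<in>blk n L i. f x \<noteq> f (fst (S i))})"
    then obtain i where "i < nblk n L" "x \<in> blk n L i" "f x \<noteq> f (fst (S i))" by auto
    thus "x \<in> {x\<in>{1..n}. f x \<noteq> f (\<phi> x)}" using blk_sub by (auto simp: \<phi>_def blk_def)
  qed
  also have "card \<dots> = (\<Sum>i<nblk n L. card {x\<in>blk n L i. f x \<noteq> f (fst (S i))})"
    by (rule card_UN_disjoint) (auto simp: blk_def)
  finally show ?thesis using e by simp
qed


definition wt :: "nat \<Rightarrow> nat \<Rightarrow> (nat \<Rightarrow> bool) \<Rightarrow> nat \<Rightarrow> nat \<times> nat \<Rightarrow> real" where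
  "wt n L f i p = (1 + 1/(4*real L)) ^ card {x\<in>blk n L i. f x \<noteq> f (fst p)} *
      (if f (fst p) \<noteq> f (snd p) then 1/2 else 1)"

lemma wt_nonneg: "wt n L f i p \<ge> 0"
  by (simp add: wt_def)

lemma sum_W:
  assumes L: "L \<ge> 1"
  shows "(\<Sum>S\<in>SS n L. \<Prod>i<nblk n L. wt n L f i (S i)) \<le> real (card (SS n L))"
proof -
  have "(\<Sum>S\<in>SS n L. \<Prod>i<nblk n L. wt n L f i (S i)) =
        (\<Prod>i<nblk n L. \<Sum>p\<in>blk n L i \<times> blk n L i. wt n L f i p)"
    unfolding SS_def by (rule prod_sum_PiE[symmetric]) auto
  also have "\<dots> \<le> (\<Prod>i<nblk n L. real (card (blk n L i)) ^ 2)"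
  proof (rule prod_mono)
    fix i assume "i \<in> {..<nblk n L}"
    show "0 \<le> (\<Sum>p\<in>blk n L i \<times> blk n L i. wt n L f i p) \<and>
          (\<Sum>p\<in>blk n L i \<times> blk n L i. wt n L f i p) \<le> real (card (blk n L i)) ^ 2"
      using block_weight[OF finite_blk card_blk[OF L] L, of n i f] wt_nonneg
      by (auto intro: sum_nonneg simp: wt_def)
  qed
  also have "\<dots> = real (card (SS n L))"
    unfolding SS_def by (simp add: card_PiE card_cartesian_product power2_eq_square)
  finally show ?thesis .
qed

lemma prod_half: "finite I \<Longrightarrow> (\<Prod>i\<in>I. if P i then 1/2 else 1::real) = (1/2) ^ card {i\<in>I. P i}"
  by (subst prod.If_cases) (simp_all add: Int_def)

lemma W_big:
  assumes L: "L \<ge> 1" and k: "k \<ge> 1" and big: "9 * real k * real L \<le> \<epsilon> * n"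
    and X: "card {i\<in>{..<nblk n L}. f (fst (S i)) \<noteq> f (snd (S i))} \<le> k"
    and Z: "\<epsilon> * n \<le> real (\<Sum>i<nblk n L. card {x\<in>blk n L i. f x \<noteq> f (fst (S i))})"
  shows "3 \<le> (\<Prod>i<nblk n L. wt n L f i (S i))"
proof -
  define q :: real where "q = 1 + 1/(4*real L)"
  define Zs where "Zs = (\<Sum>i<nblk n L. card {x\<in>blk n L i. f x \<noteq> f (fst (S i))})"
  define Xs where "Xs = card {i\<in>{..<nblk n L}. f (fst (S i)) \<noteq> f (snd (S i))}"
  have q1: "q \<ge> 1" by (simp add: q_def)
  have "(\<Prod>i<nblk n L. wt n L f i (S i)) = q ^ Zs * (1/2) ^ Xs"
    unfolding wt_def prod.distrib Zs_def Xs_def q_def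
    by (simp add: power_sum prod_half)
  moreover have "q ^ Zs \<ge> (5/4) ^ (9*k)"
  proof -
    have "real (9*k*L) \<le> real Zs" using big Z by (simp add: Zs_def)
    hence ZL: "9*k*L \<le> Zs" by linarith
    have "(5/4::real) \<le> q ^ L"
    proof -
      have "0 \<le> 1/(4*real L)" by simp
      hence "-1 \<le> 1/(4*real L)" by linarith
      from Bernoulli_inequality[OF this, of L] L show ?thesis by (simp add: q_def)
    qed
    hence "(5/4::real) ^ (9*k) \<le> (q ^ L) ^ (9*k)" by (intro power_mono) auto
    also have "\<dots> = q ^ (9*k*L)" by (simp add: power_mult[symmetric] mult.commute)
    also have "\<dots> \<le> q ^ Zs" using q1 ZL by (intro power_increasing) auto
    finally show ?thesis .
  qed
  moreover have "(1/2::real) ^ Xs \<ge> (1/2) ^ k" using X by (simp add: Xs_def power_decreasing)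
  ultimately have "(\<Prod>i<nblk n L. wt n L f i (S i)) \<ge> (5/4) ^ (9*k) * (1/2) ^ k"
    using q1 by (auto intro!: mult_mono)
  moreover have "(5/4::real) ^ (9*k) * (1/2) ^ k = ((5/4)^9 / 2) ^ k"
    by (simp add: power_mult power_mult_distrib[symmetric] power_divide)
  moreover have "((5/4::real)^9 / 2) ^ k \<ge> (5/4)^9 / 2"
    using k by (intro self_le_power) (auto simp: power_divide)
  moreover have "(5/4::real)^9 / 2 \<ge> 3" by (simp add: power_divide)
  ultimately show ?thesis by linarith
qed


lemma accept_prob_tester:
  assumes L: "L \<ge> 1" and n: "n \<ge> 1"
  shows "accept_prob (tester n k L) f = card (SS n L \<inter> {S. acc n k (Qs n L S) (map f (Qs n L S))}) / card (SS n L)"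
  unfolding accept_prob_def tester_def
  by (simp add: measure_pmf_of_set[OF SS_ne[OF L n] SS_finite] vimage_def Int_def)

lemma L1_Z0:
  assumes S: "S \<in> SS n 1" and i: "i < nblk n 1"
  shows "card {x\<in>blk n 1 i. f x \<noteq> f (fst (S i))} = 0"
proof -
  have "fst (S i) \<in> blk n 1 i" using SS_mem[OF S i] by simp
  moreover have "card (blk n 1 i) \<le> 1" using card_blk[of 1] by simp
  ultimately have "\<forall>x\<in>blk n 1 i. x = fst (S i)" using card_le_Suc0_iff_eq[of "blk n 1 i"] by auto
  thus ?thesis by auto
qed

theorem theorem1p4:
  shows "\<exists>C>0. \<forall>n k (\<epsilon>::real). n \<ge> 1 \<longrightarrow> k \<ge> 1 \<longrightarrow> 0 < \<epsilon> \<longrightarrow> \<epsilon> \<le> 1 \<longrightarrow>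
           (\<exists>T. one_sided_nonadaptive_tester n k \<epsilon> (C * real k / \<epsilon>) T)"
proof (intro exI[of _ "40::real"] conjI allI impI)
  show "(0::real) < 40" by simp
next
  fix n k :: nat and \<epsilon> :: real
  assume n: "n \<ge> 1" and k: "k \<ge> 1" and e0: "0 < \<epsilon>" and e1: "\<epsilon> \<le> 1"
  define y where "y = \<epsilon> * n / (9 * k)"
  define L where "L = (if 1 \<le> y then nat \<lfloor>y\<rfloor> else 1)"
  have ke: "real k / \<epsilon> \<ge> 1" using k e0 e1 by (simp add: field_simps)
  have L1: "L \<ge> 1" using L_def by (auto simp: le_nat_iff)
  have nb: "real (nblk n L) \<le> 19 * real k / \<epsilon>"
  proof (cases "1 \<le> y")
    case True
    have fl: "real_of_int \<lfloor>y\<rfloor> \<ge> 1" using True by simp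
    have f2: "y \<le> 2 * real_of_int \<lfloor>y\<rfloor>" using fl real_of_int_floor_gt_diff_one[of y] by linarith
    have Ly: "real L \<le> y" "real L \<ge> y / 2" unfolding L_def
      using True fl f2 of_int_floor_le[of y] by auto
    have "(n-1) div L * L \<le> n" using div_mult_mod_eq[of "n-1" L] by linarith
    hence "real ((n-1) div L) * real L \<le> real n" by (metis of_nat_le_iff of_nat_mult)
    hence "real ((n-1) div L) \<le> real n / real L" using L1 by (simp add: field_simps)
    also have "\<dots> \<le> real n / (y/2)" using Ly True by (intro divide_left_mono) auto
    also have "\<dots> = 18 * real k / \<epsilon>" using n k e0 by (simp add: y_def field_simps)
    finally show ?thesis using ke by (simp add: nblk_def)
  next
    case False
    hence "L = 1" by (simp add: L_def)
    hence "real (nblk n L) = real n" using n by (simp add: nblk_def)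
    also have "\<dots> \<le> 9 * real k / \<epsilon>" using False e0 k by (simp add: y_def field_simps)
    finally show ?thesis using k e0 by (simp add: field_simps)
  qed
  show "\<exists>T. one_sided_nonadaptive_tester n k \<epsilon> (40 * real k / \<epsilon>) T"
  proof (intro exI[of _ "tester n k L"])
    have p1: "\<forall>(Q, D)\<in>set_pmf (tester n k L). set Q \<subseteq> {1..n} \<and> real (length Q) \<le> 40 * real k / \<epsilon>"
    proof (clarify)
      fix Q D assume "(Q, D) \<in> set_pmf (tester n k L)"
      then obtain S where S: "S \<in> SS n L" and Q: "Q = Qs n L S"
        unfolding tester_def by (auto simp: set_pmf_of_set[OF SS_ne[OF L1 n] SS_finite])
      show "set Q \<subseteq> {1..n} \<and> real (length Q) \<le> 40 * real k / \<epsilon>"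
        using Qs_sub[OF S] nb ke unfolding Q length_Qs by auto
    qed
    have p2: "\<forall>f. k_monotone n k f \<longrightarrow> accept_prob (tester n k L) f = 1"
    proof (intro allI impI)
      fix f assume "k_monotone n k f"
      hence "SS n L \<inter> {S. acc n k (Qs n L S) (map f (Qs n L S))} = SS n L"
        by (auto simp: acc_def)
      thus "accept_prob (tester n k L) f = 1"
        using SS_ne[OF L1 n] SS_finite by (simp add: accept_prob_tester[OF L1 n] card_gt_0_iff)
    qed
    have p3: "\<forall>f. far_from_k_monotone n k \<epsilon> f \<longrightarrow> 1 - accept_prob (tester n k L) f \<ge> 2/3"
    proof (intro allI impI)
      fix f assume far: "far_from_k_monotone n k \<epsilon> f"
      define A where "A = SS n L \<inter> {S. acc n k (Qs n L S) (map f (Qs n L S))}"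
      have props: "card {i\<in>{..<nblk n L}. f (fst (S i)) \<noteq> f (snd (S i))} \<le> k \<and>
          \<epsilon> * n \<le> real (\<Sum>i<nblk n L. card {x\<in>blk n L i. f x \<noteq> f (fst (S i))})" if SA: "S \<in> A" for S
      proof -
        have S: "S \<in> SS n L" using SA by (simp add: A_def)
        obtain g where g: "k_monotone n k g" "map g (Qs n L S) = map f (Qs n L S)"
          using SA unfolding A_def acc_def by blast
        have agree: "\<forall>x\<in>set (Qs n L S). g x = f x" using g(2) by (simp add: map_eq_conv)
        show ?thesis using accept_mixed[OF S g(1) agree] accept_far[OF L1 n S g(1) agree far] by simp
      qed
      have "3 * real (card A) \<le> real (card (SS n L))"
      proof (cases "1 \<le> y")
        case True
        hence "real L \<le> y" unfolding L_def using of_int_floor_le[of y] by auto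
        hence big: "9 * real k * real L \<le> \<epsilon> * n" using k by (simp add: y_def field_simps)
        have "3 * real (card A) = (\<Sum>S\<in>A. 3)" by simp
        also have "\<dots> \<le> (\<Sum>S\<in>A. \<Prod>i<nblk n L. wt n L f i (S i))"
          using props W_big[OF L1 k big] by (intro sum_mono) auto
        also have "\<dots> \<le> (\<Sum>S\<in>SS n L. \<Prod>i<nblk n L. wt n L f i (S i))"
          using SS_finite by (intro sum_mono2) (auto simp: A_def wt_nonneg prod_nonneg)
        also have "\<dots> \<le> real (card (SS n L))" by (rule sum_W[OF L1])
        finally show ?thesis .
      next
        case False
        hence L: "L = 1" by (simp add: L_def)
        have "A = {}"
        proof (rule ccontr)
          assume "A \<noteq> {}"
          then obtain S where S: "S \<in> A" by auto
          have z: "(\<Sum>i<nblk n L. card {x\<in>blk n L i. f x \<noteq> f (fst (S i))}) = 0"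
          proof -
            have S': "S \<in> SS n 1" using S L by (simp add: A_def)
            show ?thesis using L1_Z0[OF S', of _ f] unfolding L by (simp add: sum.neutral)
          qed
          have "\<epsilon> * n \<le> real (\<Sum>i<nblk n L. card {x\<in>blk n L i. f x \<noteq> f (fst (S i))})"
            using props[OF S] by blast
          hence "\<epsilon> * n \<le> 0" unfolding z by simp
          moreover have "\<epsilon> * n > 0" using e0 n by simp
          ultimately show False by linarith
        qed
        thus ?thesis by simp
      qed
      hence "accept_prob (tester n k L) f \<le> 1/3"
        using SS_ne[OF L1 n] SS_finite unfolding accept_prob_tester[OF L1 n] A_def[symmetric]
        by (simp add: field_simps card_gt_0_iff)
      thus "1 - accept_prob (tester n k L) f \<ge> 2/3" by simp
    qed
    show "one_sided_nonadaptive_tester n k \<epsilon> (40 * real k / \<epsilon>) (tester n k L)"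
      unfolding one_sided_nonadaptive_tester_def using p1 p2 p3 by blast
  qed
qed

end
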